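(* For all integers $n\geq0$, $$s_1(n)+\sum_{j\geq1}(-1)^j\left(s_1(n-j(3j-2))+s_1(n-j(3j+2))\right)=s_2(n)+\sum_{j\geq1}(-1)^j\left(s_2(n-j(3j-1))+s_2(n-j(3j+1))\right)$$ and this common value equals $1$ if $n=6\,\frac{j(3j-1)}{2}$ for some even $j\in\mathbb{Z}$, equals $-1$ if $n=6\,\frac{j(3j-1)}{2}$ for some odd $j\in\mathbb{Z}$, and equals $0$ otherwise. (Explicitly, the sums are $s_1(n)-s_1(n-1)-s_1(n-5)+s_1(n-8)+s_1(n-16)-\cdots$ and $s_2(n)-s_2(n-2)-s_2(n-4)+s_2(n-10)+s_2(n-14)-\cdots$.)
   Context: $s_1(n)$ (resp. $s_2(n)$) is the number of partitions of $n$ all of whose parts are congruent to $\pm1$ (resp. $\pm2$) modulo $6$, with value $1$ at $n=0$ and $0$ at negative arguments. The numbers $j(3j-1)/2$, $j\in\mathbb{Z}$, are the generalized pentagonal numbers, distinct for distinct $j$. *)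

theory Defs
  imports Main "HOL-Library.Multiset"
begin

definition parts_count :: "nat set \<Rightarrow> int \<Rightarrow> int" where
  "parts_count R m = (if m < 0 then 0 else
     int (card {M :: nat multiset. (\<forall>p\<in>#M. 0 < p \<and> p mod 6 \<in> R) \<and> sum_mset M = nat m}))"

definition s1 :: "int \<Rightarrow> int" where "s1 = parts_count {1, 5}"
definition s2 :: "int \<Rightarrow> int" where "s2 = parts_count {2, 4}"

end

theory Submission
  imports Defs "HOL-Computational_Algebra.Formal_Power_Series"
begin


definition cnt :: "nat set \<Rightarrow> nat \<Rightarrow> nat \<Rightarrow> nat" where
  "cnt R K m = card {M :: nat multiset. (\<forall>p\<in>#M. 0 < p \<and> p mod 6 \<in> R \<and> p \<le> K) \<and> sum_mset M = m}"

lemma size_le_sum_pos: "(\<forall>p\<in>#M. 0 < (p::nat)) \<Longrightarrow> size M \<le> sum_mset M"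
  by (induction M) auto

lemma elem_le_sum: "(p::nat) \<in># M \<Longrightarrow> p \<le> sum_mset M"
  by (induction M) auto

lemma fin_parts: "finite {M :: nat multiset. (\<forall>p\<in>#M. 0 < p \<and> P p) \<and> sum_mset M = m}"
proof (rule finite_subset)
  show "{M :: nat multiset. (\<forall>p\<in>#M. 0 < p \<and> P p) \<and> sum_mset M = m} \<subseteq> (\<Union>s\<in>{0..m}. multisets_of_size {1..m} s)"
  proof
    fix M assume M: "M \<in> {M :: nat multiset. (\<forall>p\<in>#M. 0 < p \<and> P p) \<and> sum_mset M = m}"
    then have "size M \<le> m" using size_le_sum_pos[of M] by auto
    moreover have "set_mset M \<subseteq> {1..m}" using M elem_le_sum[of _ M] by (auto simp: Suc_le_eq)
    ultimately show "M \<in> (\<Union>s\<in>{0..m}. multisets_of_size {1..m} s)"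
      by (auto simp: multisets_of_size_def)
  qed
  show "finite (\<Union>s\<in>{0..m}. multisets_of_size {1..m} s)" by auto
qed

lemma cnt_0: "cnt R 0 m = (if m = 0 then 1 else 0)"
proof -
  have "{M :: nat multiset. (\<forall>p\<in>#M. 0 < p \<and> p mod 6 \<in> R \<and> p \<le> 0) \<and> sum_mset M = m}
     = (if m = 0 then {{#}} else {})"
  proof -
    have key: "(\<forall>p\<in>#M. 0 < p \<and> P p \<and> p \<le> (0::nat)) = (M = {#})" for M P
      by (induction M) auto
    show ?thesis by (simp only: key) auto
  qed
  then show ?thesis by (simp add: cnt_def)
qed


definition Aset :: "nat set \<Rightarrow> nat \<Rightarrow> nat \<Rightarrow> nat multiset set" where
  "Aset R K m = {M :: nat multiset. (\<forall>p\<in>#M. 0 < p \<and> p mod 6 \<in> R \<and> p \<le> K) \<and> sum_mset M = m}"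

lemma fin_Aset: "finite (Aset R K m)"
  unfolding Aset_def using fin_parts[of "\<lambda>p. p mod 6 \<in> R \<and> p \<le> K" m] by simp

lemma Aset_split: "Aset R (Suc K) m = Aset R K m \<union> {M \<in> Aset R (Suc K) m. Suc K \<in># M}"
  unfolding Aset_def by (auto simp: le_Suc_eq)

lemma Aset_disj: "Aset R K m \<inter> {M \<in> Aset R (Suc K) m. Suc K \<in># M} = {}"
  unfolding Aset_def by auto

lemma Aset_B1:
  assumes "Suc K mod 6 \<in> R" "Suc K \<le> m"
  shows "{M \<in> Aset R (Suc K) m. Suc K \<in># M} = add_mset (Suc K) ` Aset R (Suc K) (m - Suc K)"
proof
  show "{M \<in> Aset R (Suc K) m. Suc K \<in># M} \<subseteq> add_mset (Suc K) ` Aset R (Suc K) (m - Suc K)"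
  proof
    fix M assume "M \<in> {M \<in> Aset R (Suc K) m. Suc K \<in># M}"
    then have M: "M \<in> Aset R (Suc K) m" "Suc K \<in># M" by auto
    then have eq: "M = add_mset (Suc K) (M - {#Suc K#})" by simp
    have e: "sum_mset M = Suc K + sum_mset (M - {#Suc K#})"
      by (subst eq) simp
    have "M - {#Suc K#} \<in> Aset R (Suc K) (m - Suc K)"
      using M(1) e unfolding Aset_def by (auto dest: in_diffD)
    with eq show "M \<in> add_mset (Suc K) ` Aset R (Suc K) (m - Suc K)" by blast
  qed
  show "add_mset (Suc K) ` Aset R (Suc K) (m - Suc K) \<subseteq> {M \<in> Aset R (Suc K) m. Suc K \<in># M}"
    using assms unfolding Aset_def by auto
qed

lemma Aset_B2:
  assumes "\<not> (Suc K mod 6 \<in> R \<and> Suc K \<le> m)"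
  shows "{M \<in> Aset R (Suc K) m. Suc K \<in># M} = {}"
proof (rule ccontr)
  assume "{M \<in> Aset R (Suc K) m. Suc K \<in># M} \<noteq> {}"
  then obtain M where M: "M \<in> Aset R (Suc K) m" "Suc K \<in># M" by auto
  then have "Suc K mod 6 \<in> R" unfolding Aset_def by auto
  moreover have "Suc K \<le> m" using M elem_le_sum[of "Suc K" M] unfolding Aset_def by auto
  ultimately show False using assms by auto
qed

lemma cnt_Aset: "cnt R K m = card (Aset R K m)"
  by (simp add: cnt_def Aset_def)

lemma cnt_Suc: "cnt R (Suc K) m = cnt R K m +
   (if Suc K mod 6 \<in> R \<and> Suc K \<le> m then cnt R (Suc K) (m - Suc K) else 0)"
proof -
  have finB: "finite {M \<in> Aset R (Suc K) m. Suc K \<in># M}" using fin_Aset[of R "Suc K" m] by auto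
  have "cnt R (Suc K) m = card (Aset R K m) + card {M \<in> Aset R (Suc K) m. Suc K \<in># M}"
    unfolding cnt_Aset by (subst Aset_split, rule card_Un_disjoint[OF fin_Aset finB Aset_disj])
  moreover have "card {M \<in> Aset R (Suc K) m. Suc K \<in># M} =
     (if Suc K mod 6 \<in> R \<and> Suc K \<le> m then cnt R (Suc K) (m - Suc K) else 0)"
  proof (cases "Suc K mod 6 \<in> R \<and> Suc K \<le> m")
    case True
    then show ?thesis unfolding Aset_B1[OF conjunct1[OF True] conjunct2[OF True]] cnt_Aset
      using True by (simp add: card_image inj_on_def)
  next
    case False
    then show ?thesis unfolding Aset_B2[OF False] by auto
  qed
  ultimately show ?thesis by (simp add: cnt_Aset)
qed

definition GF :: "nat set \<Rightarrow> nat \<Rightarrow> int fps" where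
  "GF R K = Abs_fps (\<lambda>m. int (cnt R K m))"

lemma GF_0: "GF R 0 = 1"
  by (auto simp: fps_eq_iff GF_def cnt_0)

lemma GF_Suc: "GF R (Suc K) * (if Suc K mod 6 \<in> R then 1 - fps_X ^ Suc K else 1) = GF R K"
proof (cases "Suc K mod 6 \<in> R")
  case True
  show ?thesis
  proof (subst fps_eq_iff, intro allI)
    fix m
    show "fps_nth (GF R (Suc K) * (if Suc K mod 6 \<in> R then 1 - fps_X ^ Suc K else 1)) m = fps_nth (GF R K) m"
    proof -
      have "fps_nth (GF R (Suc K) * (1 - fps_X ^ Suc K)) m = fps_nth (GF R (Suc K)) m - fps_nth (GF R (Suc K) * fps_X ^ Suc K) m"
        by (simp add: right_diff_distrib)
      also have "\<dots> = fps_nth (GF R K) m"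
        unfolding fps_X_power_mult_right_nth GF_def fps_nth_Abs_fps using True
          using cnt_Suc[of R K m] True by (auto simp: not_less)
      finally show ?thesis using True by simp
    qed
  qed
next
  case False
  have "cnt R (Suc K) m = cnt R K m" for m by (subst cnt_Suc) (simp add: False)
  then show ?thesis using False by (simp add: fps_eq_iff GF_def)
qed

lemma GF_prod: "GF R K * (\<Prod>k<K. if Suc k mod 6 \<in> R then 1 - fps_X ^ Suc k else 1) = 1"
proof (induction K)
  case 0 then show ?case by (simp add: GF_0)
next
  case (Suc K)
  have "GF R (Suc K) * (\<Prod>k<Suc K. if Suc k mod 6 \<in> R then 1 - fps_X ^ Suc k else 1)
     = (GF R (Suc K) * (if Suc K mod 6 \<in> R then 1 - fps_X ^ Suc K else 1)) * (\<Prod>k<K. if Suc k mod 6 \<in> R then 1 - fps_X ^ Suc k else (1::int fps))"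
    by (simp add: mult_ac)
  also have "\<dots> = 1" using Suc by (simp add: GF_Suc)
  finally show ?case .
qed

lemma GF_nth: "m \<le> K \<Longrightarrow> fps_nth (GF R K) m = parts_count R (int m)"
proof -
  assume "m \<le> K"
  have "Aset R K m = {M :: nat multiset. (\<forall>p\<in>#M. 0 < p \<and> p mod 6 \<in> R) \<and> sum_mset M = m}"
    unfolding Aset_def using elem_le_sum \<open>m \<le> K\<close> by (auto intro: order_trans)
  then show ?thesis by (simp add: GF_def parts_count_def cnt_def Aset_def)
qed


fun qb :: "'a::comm_ring_1 \<Rightarrow> nat \<Rightarrow> nat \<Rightarrow> 'a" where
  "qb p 0 i = (if i = 0 then 1 else 0)"
| "qb p (Suc M) i = qb p M i + (if i = 0 then 0 else p ^ (Suc M - i) * qb p M (i - 1))"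

lemma qb_gt: "i > M \<Longrightarrow> qb p M i = 0"
  by (induction M arbitrary: i) auto

lemma qb_0: "qb p M 0 = 1"
  by (induction M) auto

lemma qb_diag: "qb p M M = 1"
  by (induction M) (auto simp: qb_gt)

definition tri :: "nat \<Rightarrow> nat" where "tri i = (\<Sum>k<i. k)"

lemma tri_Suc: "tri (Suc i) = tri i + i" by (simp add: tri_def)
lemma tri_0: "tri 0 = 0" by (simp add: tri_def)

lemma gauss:
  fixes x y p :: "'a::comm_ring_1"
  shows "(\<Prod>m<M. x + y * p ^ m) = (\<Sum>i\<le>M. qb p M i * p ^ tri i * y ^ i * x ^ (M - i))"
proof (induction M)
  case 0 then show ?case by (simp add: tri_0)
next
  case (Suc M)
  define f where "f i = qb p M i * p ^ tri i * y ^ i * x ^ (M - i)" for i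
  have A: "(\<Sum>i\<le>Suc M. qb p M i * p ^ tri i * y ^ i * x ^ (Suc M - i)) = (\<Sum>i\<le>M. f i) * x"
  proof -
    have "(\<Sum>i\<le>Suc M. qb p M i * p ^ tri i * y ^ i * x ^ (Suc M - i)) = (\<Sum>i\<le>M. qb p M i * p ^ tri i * y ^ i * x ^ (Suc M - i))"
      by (simp add: qb_gt)
    also have "\<dots> = (\<Sum>i\<le>M. f i * x)"
      by (rule sum.cong) (auto simp: f_def Suc_diff_le mult_ac)
    finally show ?thesis by (simp add: sum_distrib_right)
  qed
  have B: "(\<Sum>i\<le>Suc M. (if i = 0 then 0 else p ^ (Suc M - i) * qb p M (i - 1)) * p ^ tri i * y ^ i * x ^ (Suc M - i))
      = (\<Sum>i\<le>M. f i) * (y * p ^ M)"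
  proof -
    have "(\<Sum>i\<le>Suc M. (if i = 0 then 0 else p ^ (Suc M - i) * qb p M (i - 1)) * p ^ tri i * y ^ i * x ^ (Suc M - i))
       = (\<Sum>i\<le>M. p ^ (M - i) * qb p M i * p ^ tri (Suc i) * y ^ Suc i * x ^ (M - i))"
      by (subst sum.atMost_Suc_shift) simp
    also have "\<dots> = (\<Sum>i\<le>M. f i * (y * p ^ M))"
    proof (rule sum.cong)
      fix i assume "i \<in> {..M}"
      then have "p ^ (M - i) * p ^ tri (Suc i) = p ^ tri i * p ^ M"
        by (simp add: tri_Suc power_add[symmetric] add.commute)
      then show "p ^ (M - i) * qb p M i * p ^ tri (Suc i) * y ^ Suc i * x ^ (M - i) = f i * (y * p ^ M)"
        unfolding f_def by (simp add: mult_ac)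
    qed simp
    finally show ?thesis by (simp add: sum_distrib_right)
  qed
  have "(\<Prod>m<Suc M. x + y * p ^ m) = (\<Sum>i\<le>M. f i) * (x + y * p ^ M)"
    using Suc by (simp add: f_def)
  also have "\<dots> = (\<Sum>i\<le>Suc M. qb p M i * p ^ tri i * y ^ i * x ^ (Suc M - i))
      + (\<Sum>i\<le>Suc M. (if i = 0 then 0 else p ^ (Suc M - i) * qb p M (i - 1)) * p ^ tri i * y ^ i * x ^ (Suc M - i))"
    unfolding A B by (simp add: distrib_left)
  also have "\<dots> = (\<Sum>i\<le>Suc M. qb p (Suc M) i * p ^ tri i * y ^ i * x ^ (Suc M - i))"
    by (simp add: sum.distrib[symmetric] distrib_right)
  finally show ?case .
qed

definition pp :: "'a::comm_ring_1 \<Rightarrow> nat \<Rightarrow> 'a" where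
  "pp p n = (\<Prod>k<n. 1 - p ^ Suc k)"

lemma pp_Suc: "pp p (Suc n) = pp p n * (1 - p ^ Suc n)"
  by (simp add: pp_def)

lemma qb_pp: "i \<le> M \<Longrightarrow> qb p M i * pp p i * pp p (M - i) = pp p M"
proof (induction M arbitrary: i)
  case 0 then show ?case by (simp add: pp_def)
next
  case (Suc M)
  show ?case
  proof (cases "i = 0")
    case True then show ?thesis by (simp add: qb_0 pp_def del: qb.simps)
  next
    case False
    show ?thesis
    proof (cases "i = Suc M")
      case True then show ?thesis by (simp add: qb_diag pp_def del: qb.simps)
    next
      case False2: False
      then have iM: "i \<le> M" using Suc.prems by simp
      obtain i' where i': "i = Suc i'" using False by (cases i) auto
      have IH1: "qb p M i * pp p i * pp p (M - i) = pp p M" using Suc.IH[OF iM] .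
      have IH2: "qb p M i' * pp p i' * pp p (M - i') = pp p M" using Suc.IH[of i'] iM i' by simp
      have e1: "Suc M - i = Suc (M - i)" using iM by simp
      have e2: "M - i' = Suc M - i" using iM i' by simp
      have "qb p (Suc M) i * pp p i * pp p (Suc M - i)
          = (qb p M i * pp p i * pp p (M - i)) * (1 - p ^ (Suc M - i))
            + p ^ (Suc M - i) * (1 - p ^ i) * (qb p M i' * pp p i' * pp p (M - i'))"
      proof -
        have q: "qb p (Suc M) i = qb p M i + p ^ (Suc M - i) * qb p M i'"
          using i' by simp
        have a: "pp p i = pp p i' * (1 - p ^ i)" using i' by (simp add: pp_Suc)
        have b: "pp p (Suc M - i) = pp p (M - i) * (1 - p ^ (Suc M - i))" using e1 by (simp add: pp_Suc)
        have c: "pp p (M - i') = pp p (M - i) * (1 - p ^ (Suc M - i))" using e2 b by simp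
        have ring: "(A + F*B)*(C*(1-G))*(D*(1-F)) = (A*(C*(1-G))*D)*(1-F) + F*(1-G)*(B*C*(D*(1-F)))"
          for A B C D F G :: 'a by (simp add: algebra_simps)
        show ?thesis unfolding q a b c by (rule ring)
      qed
      also have "\<dots> = pp p M * (1 - p ^ Suc M)"
      proof -
        have "p ^ (Suc M - i) * p ^ i = p ^ Suc M" using iM by (simp add: power_add[symmetric])
        then show ?thesis unfolding IH1 IH2 by (simp add: algebra_simps)
      qed
      finally show ?thesis by (simp add: pp_Suc)
    qed
  qed
qed


definition eqm :: "nat \<Rightarrow> int fps \<Rightarrow> int fps \<Rightarrow> bool" where
  "eqm T f g \<longleftrightarrow> (\<forall>m<T. fps_nth f m = fps_nth g m)"

lemma eqm_refl[simp]: "eqm T f f" by (simp add: eqm_def)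
lemma eqm_sym: "eqm T f g \<Longrightarrow> eqm T g f" by (simp add: eqm_def)
lemma eqm_trans: "eqm T f g \<Longrightarrow> eqm T g h \<Longrightarrow> eqm T f h" by (simp add: eqm_def)
declare eqm_trans[trans]

lemma eqm_mono: "eqm T f g \<Longrightarrow> T' \<le> T \<Longrightarrow> eqm T' f g" by (simp add: eqm_def)

lemma eqm_add: "eqm T f f' \<Longrightarrow> eqm T g g' \<Longrightarrow> eqm T (f + g) (f' + g')"
  by (simp add: eqm_def)

lemma eqm_mult: "eqm T f f' \<Longrightarrow> eqm T g g' \<Longrightarrow> eqm T (f * g) (f' * g')"
  unfolding eqm_def fps_mult_nth by (auto intro!: sum.cong)

lemma eqm_cmult: "eqm T f f' \<Longrightarrow> eqm T (c * f) (c * f')"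
  by (rule eqm_mult) auto

lemma eqm_sum: "(\<And>i. i \<in> A \<Longrightarrow> eqm T (f i) (g i)) \<Longrightarrow> eqm T (\<Sum>i\<in>A. f i) (\<Sum>i\<in>A. g i)"
  by (induction A rule: infinite_finite_induct) (auto intro: eqm_add)

lemma eqm_prod: "(\<And>i. i \<in> A \<Longrightarrow> eqm T (f i) (g i)) \<Longrightarrow> eqm T (\<Prod>i\<in>A. f i) (\<Prod>i\<in>A. g i)"
  by (induction A rule: infinite_finite_induct) (auto intro: eqm_mult)

lemma eqm_shift: "eqm A f g \<Longrightarrow> eqm (A + e) (fps_X ^ e * f) (fps_X ^ e * g)"
  unfolding eqm_def fps_X_power_mult_nth by auto

lemma eqm_one_minus: "T \<le> k \<Longrightarrow> eqm T (1 - fps_X ^ k) 1"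
  unfolding eqm_def by auto

lemma eqm_prod_one: "(\<And>i. i \<in> A \<Longrightarrow> T \<le> f i) \<Longrightarrow> eqm T (\<Prod>i\<in>A. 1 - fps_X ^ f i) 1"
proof -
  assume "\<And>i. i \<in> A \<Longrightarrow> T \<le> f i"
  then have "eqm T (\<Prod>i\<in>A. 1 - fps_X ^ f i) (\<Prod>i\<in>A. 1)"
    by (intro eqm_prod eqm_one_minus) auto
  then show ?thesis by simp
qed

lemma eqm_nonzero: "eqm 1 f 1 \<Longrightarrow> f \<noteq> 0"
  unfolding eqm_def by auto

lemma prod_split: "(\<Prod>m<n+(r::nat). f m) = (\<Prod>m<n. f m) * (\<Prod>k<r. f (n+k))"
  by (induction r) (auto simp: mult_ac)

lemma pp_split: "pp p (n + r) = pp p n * (\<Prod>k<r. 1 - p ^ (n + k + 1))"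
  unfolding pp_def by (subst prod_split) simp

lemma Xpow: "((fps_X :: int fps) ^ a) ^ m = fps_X ^ (a*m)" by (simp add: power_mult)

lemma pp_X: "pp (fps_X ^ a) n = (\<Prod>k<n. 1 - (fps_X :: int fps) ^ (a * (k + 1)))"
  unfolding pp_def Xpow by simp

lemma pp_nonzero: "a > 0 \<Longrightarrow> pp (fps_X ^ a :: int fps) n \<noteq> 0"
  unfolding pp_X by (rule eqm_nonzero, rule eqm_prod_one) auto

lemma pp_eqm: "a > 0 \<Longrightarrow> n \<le> n' \<Longrightarrow> eqm (n + 1) (pp (fps_X ^ a :: int fps) n') (pp (fps_X ^ a) n)"
proof -
  assume a: "a > 0" and n: "n \<le> n'"
  obtain r where r: "n' = n + r" using n le_Suc_ex by blast
  have "eqm (n+1) (\<Prod>k<r. 1 - (fps_X ^ a :: int fps) ^ (n + k + 1)) 1"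
  proof -
    have "(\<Prod>k<r. 1 - (fps_X ^ a :: int fps) ^ (n + k + 1)) = (\<Prod>k<r. 1 - fps_X ^ (a * (n + k + 1)))"
      by (simp only: Xpow)
    also have "eqm (n+1) \<dots> 1"
    proof (rule eqm_prod_one)
      fix k
      have "1 * (n + k + 1) \<le> a * (n + k + 1)" using a by (intro mult_le_mono1) simp
      then show "n + 1 \<le> a * (n + k + 1)" by simp
    qed
    finally show ?thesis .
  qed
  then have "eqm (n+1) (pp (fps_X ^ a) n * (\<Prod>k<r. 1 - (fps_X ^ a :: int fps) ^ (n + k + 1))) (pp (fps_X ^ a) n * 1)"
    by (intro eqm_mult) auto
  then show ?thesis unfolding r pp_split by simp
qed

lemma eqm_prod_X:
  assumes "a > 0"
  shows "eqm (c + 1) (\<Prod>k<r. 1 - ((fps_X :: int fps) ^ a) ^ (c + k + 1)) 1"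
proof -
  have "(\<Prod>k<r. 1 - ((fps_X :: int fps) ^ a) ^ (c + k + 1)) = (\<Prod>k<r. 1 - fps_X ^ (a * (c + k + 1)))"
    by (simp only: Xpow)
  also have "eqm (c+1) \<dots> 1"
  proof (rule eqm_prod_one)
    fix k
    have "1 * (c + k + 1) \<le> a * (c + k + 1)" using assms by (intro mult_le_mono1) simp
    then show "c + 1 \<le> a * (c + k + 1)" by simp
  qed
  finally show ?thesis .
qed

lemma qb_trunc_hi:
  assumes a: "a > 0" and i: "N \<le> i" "i \<le> 2*N"
  shows "eqm (2*N - i + 1) (pp (fps_X ^ a :: int fps) N * qb (fps_X ^ a) (2*N) i) 1"
proof -
  let ?p = "fps_X ^ a :: int fps"
  define R where "R = (\<Prod>k<i. 1 - ?p ^ (2*N - i + k + 1))"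
  have "qb ?p (2*N) i * pp ?p i * pp ?p (2*N - i) = pp ?p (2*N)" by (rule qb_pp) (use i in simp)
  also have "pp ?p (2*N) = pp ?p (2*N - i) * R"
    unfolding R_def using pp_split[of ?p "2*N - i" i] i by simp
  finally have "pp ?p (2*N - i) * (qb ?p (2*N) i * pp ?p i) = pp ?p (2*N - i) * R"
    by (simp add: mult_ac)
  then have qR: "qb ?p (2*N) i * pp ?p i = R"
    using pp_nonzero[OF a] by simp
  have "eqm (2*N - i + 1) (pp ?p N * qb ?p (2*N) i) (pp ?p i * qb ?p (2*N) i)"
    by (rule eqm_mult[OF eqm_mono[OF eqm_sym[OF pp_eqm[OF a i(1)]]]]) (use i in auto)
  also have "pp ?p i * qb ?p (2*N) i = R" using qR by (simp add: mult_ac)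
  also have "eqm (2*N - i + 1) R 1" unfolding R_def by (rule eqm_prod_X[OF a])
  finally show ?thesis .
qed

lemma qb_trunc_lo:
  assumes a: "a > 0" and i: "i < N"
  shows "eqm (i + 1) (pp (fps_X ^ a :: int fps) N * qb (fps_X ^ a) (2*N) i) 1"
proof -
  let ?p = "fps_X ^ a :: int fps"
  define R where "R = (\<Prod>k<2*N - i. 1 - ?p ^ (i + k + 1))"
  have "qb ?p (2*N) i * pp ?p i * pp ?p (2*N - i) = pp ?p (2*N)" by (rule qb_pp) (use i in simp)
  also have "pp ?p (2*N) = pp ?p i * R"
    unfolding R_def using pp_split[of ?p i "2*N - i"] i by simp
  finally have "pp ?p i * (qb ?p (2*N) i * pp ?p (2*N - i)) = pp ?p i * R"
    by (simp add: mult_ac)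
  then have qR: "qb ?p (2*N) i * pp ?p (2*N - i) = R"
    using pp_nonzero[OF a] by simp
  have "eqm (i + 1) (pp ?p N * qb ?p (2*N) i) (pp ?p (2*N - i) * qb ?p (2*N) i)"
    by (rule eqm_mult[OF eqm_mono[OF eqm_sym[OF pp_eqm[OF a, of N "2*N - i"]]]]) (use i in auto)
  also have "pp ?p (2*N - i) * qb ?p (2*N) i = R" using qR by (simp add: mult_ac)
  also have "eqm (i + 1) R 1" unfolding R_def by (rule eqm_prod_X[OF a])
  finally show ?thesis .
qed


definition T2 :: "int \<Rightarrow> int" where "T2 x = x * (x - 1) div 2"

lemma T2_twice: "T2 x * 2 = x * (x - 1)"
proof -
  have "even (x * (x - 1))" by simp
  then show ?thesis unfolding T2_def by simp
qed

lemma T2_add: "T2 (x + y) = T2 x + T2 y + x * y"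
proof -
  have "T2 (x + y) * 2 = (T2 x + T2 y + x * y) * 2"
    unfolding distrib_right T2_twice by (simp add: algebra_simps)
  then show ?thesis by simp
qed

lemma tri_T2: "int (tri i) = T2 (int i)"
proof (induction i)
  case 0 then show ?case by (simp add: tri_0 T2_def)
next
  case (Suc i)
  have t1: "T2 1 = 0" by (simp add: T2_def)
  have "T2 (int i + 1) = T2 (int i) + T2 1 + int i" by (simp add: T2_add)
  then have "T2 (int (Suc i)) = T2 (int i) + int i" using t1 by (simp add: add.commute)
  moreover have "int (tri (Suc i)) = int (tri i) + int i" by (simp add: tri_Suc)
  ultimately show ?case using Suc by simp
qed

definition ex :: "nat \<Rightarrow> nat \<Rightarrow> int \<Rightarrow> int" where
  "ex a b j = int a * T2 j + int b * j"

lemma T2_nonneg: "j \<ge> 0 \<Longrightarrow> T2 j \<ge> 0"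
proof -
  assume "j \<ge> 0"
  then have "j * (j - 1) \<ge> 0" by (cases "j = 0") (auto intro: mult_nonneg_nonneg)
  then show ?thesis using T2_twice[of j] by linarith
qed

lemma T2_neg: "j < 0 \<Longrightarrow> T2 j \<ge> - j"
proof -
  assume j: "j < 0"
  have "j * (j - 1) + 2 * j = j * (j + 1)" by (simp add: algebra_simps)
  moreover have "j * (j + 1) \<ge> 0" using j by (cases "j = -1") (auto intro: mult_nonpos_nonpos)
  ultimately show ?thesis using T2_twice[of j] by linarith
qed

lemma ex_pos: "0 < b \<Longrightarrow> j \<ge> 0 \<Longrightarrow> ex a b j \<ge> j"
proof -
  assume b: "0 < b" and j: "j \<ge> 0"
  have "int a * T2 j \<ge> 0" using T2_nonneg[OF j] by simp
  moreover have "int b * j \<ge> 1 * j" using b j by (intro mult_right_mono) auto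
  ultimately show ?thesis unfolding ex_def by linarith
qed

lemma ex_neg: "b < a \<Longrightarrow> j < 0 \<Longrightarrow> ex a b j \<ge> - j"
proof -
  assume ab: "b < a" and j: "j < 0"
  have "int a * T2 j \<ge> int a * (- j)" using T2_neg[OF j] by (intro mult_left_mono) auto
  moreover have "int a * (- j) \<ge> (int b + 1) * (- j)" using ab j by (intro mult_right_mono) auto
  ultimately show ?thesis unfolding ex_def by (simp add: algebra_simps)
qed

lemma ex_nonneg: "0 < b \<Longrightarrow> b < a \<Longrightarrow> ex a b j \<ge> 0"
  using ex_pos[of b j a] ex_neg[of b a j] by (cases "j \<ge> 0") auto

lemma exp_identity:
  assumes "0 < b" "b < a" and that: "i \<le> 2 * N"
  shows "a * tri i + b * i + a * N * (2 * N - i) = (a * N * N + b * N + a * tri N) + nat (ex a b (int i - int N))"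
proof -
  have "int (a * tri i + b * i + a * N * (2 * N - i)) = int (a * N * N + b * N + a * tri N) + ex a b (int i - int N)"
  proof -
    have h: "T2 (int i) = T2 (int N) + T2 (int i - int N) + int N * (int i - int N)"
      using T2_add[of "int N" "int i - int N"] by simp
    have d: "int (a * N * (2 * N - i)) = int a * int N * (2 * int N - int i)" using that by (simp add: of_nat_diff)
    have "int (a * tri i + b * i + a * N * (2 * N - i)) = int a * T2 (int i) + int b * int i + int a * int N * (2 * int N - int i)"
      unfolding of_nat_add d by (simp add: tri_T2)
    also have "\<dots> = int (a * N * N + b * N + a * tri N) + ex a b (int i - int N)"
      unfolding h ex_def by (simp add: tri_T2 algebra_simps)
    finally show ?thesis .
  qed
  moreover have "ex a b (int i - int N) \<ge> 0" using ex_nonneg[OF assms(1,2)] by blast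
  ultimately have "int (a * tri i + b * i + a * N * (2 * N - i)) = int ((a * N * N + b * N + a * tri N) + nat (ex a b (int i - int N)))"
    by (simp only: of_nat_add nat_0_le)
  then show ?thesis by (simp only: of_nat_eq_iff)
qed


definition Pi1 :: "nat \<Rightarrow> nat \<Rightarrow> nat \<Rightarrow> int fps" where
  "Pi1 a b N = (\<Prod>k<N. 1 - fps_X ^ (a * (k + 1) - b))"
definition Pi2 :: "nat \<Rightarrow> nat \<Rightarrow> nat \<Rightarrow> int fps" where
  "Pi2 a b N = (\<Prod>k<N. 1 - fps_X ^ (a * k + b))"

lemma JTP_finite:
  assumes b: "0 < b" and ab: "b < a"
  shows "(-1) ^ N * (Pi1 a b N * Pi2 a b N) =
    (\<Sum>i\<le>2*N. (-1) ^ i * qb (fps_X ^ a) (2*N) i * fps_X ^ nat (ex a b (int i - int N)))"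
proof -
  let ?X = "fps_X :: int fps"
  let ?p = "?X ^ a" and ?w = "- (?X ^ b)"
  define C where "C = a * N * N + b * N + a * tri N"
  have G: "(\<Prod>m<2*N. ?p ^ N + ?w * ?p ^ m) = (\<Sum>i\<le>2*N. qb ?p (2*N) i * ?p ^ tri i * ?w ^ i * (?p ^ N) ^ (2*N - i))"
    by (rule gauss)
  have L1: "(\<Prod>m<N. ?p ^ N + ?w * ?p ^ m) = (-1) ^ N * ?X ^ (b * N + a * tri N) * Pi1 a b N"
  proof -
    have "(\<Prod>m<N. ?p ^ N + ?w * ?p ^ m) = (\<Prod>k<N. ?p ^ N + ?w * ?p ^ (N - Suc k))"
      by (rule prod.nat_diff_reindex[symmetric])
    also have "\<dots> = (\<Prod>k<N. (- 1) * ?X ^ (b + a * (N - Suc k)) * (1 - ?X ^ (a * (k + 1) - b)))"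
    proof (rule prod.cong[OF refl])
      fix k assume k: "k \<in> {..<N}"
      have "N - Suc k + (k + 1) = N" using k by simp
      then have "a * (N - Suc k) + a * (k + 1) = a * N" by (simp only: add_mult_distrib2[symmetric])
      moreover have "a * (k + 1) \<ge> b" using ab by (simp add: trans_le_add1 less_imp_le)
      ultimately have e: "b + a * (N - Suc k) + (a * (k + 1) - b) = a * N" by simp
      have "?X ^ (a * N) = ?X ^ (b + a * (N - Suc k)) * ?X ^ (a * (k + 1) - b)"
        unfolding power_add[symmetric] e ..
      then show "?p ^ N + ?w * ?p ^ (N - Suc k) = (- 1) * ?X ^ (b + a * (N - Suc k)) * (1 - ?X ^ (a * (k + 1) - b))"
        by (simp add: Xpow algebra_simps power_add)
    qed
    also have "\<dots> = (-1) ^ N * ?X ^ (\<Sum>k<N. b + a * (N - Suc k)) * Pi1 a b N"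
      unfolding prod.distrib prod_constant card_lessThan power_sum[symmetric] Pi1_def ..
    also have "(\<Sum>k<N. b + a * (N - Suc k)) = b * N + a * tri N"
    proof -
      have "(\<Sum>k<N. N - Suc k) = (\<Sum>k<N. k)" by (rule sum.nat_diff_reindex)
      then show ?thesis by (simp add: sum.distrib sum_distrib_left[symmetric] tri_def mult.commute)
    qed
    finally show ?thesis .
  qed
  have L2: "(\<Prod>k<N. ?p ^ N + ?w * ?p ^ (N + k)) = ?X ^ (a * N * N) * Pi2 a b N"
  proof -
    have "(\<Prod>k<N. ?p ^ N + ?w * ?p ^ (N + k)) = (\<Prod>k<N. ?X ^ (a * N) * (1 - ?X ^ (a * k + b)))"
      by (rule prod.cong[OF refl]) (simp add: Xpow algebra_simps power_add)
    also have "\<dots> = ?X ^ (a * N * N) * Pi2 a b N"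
      by (simp add: prod.distrib Pi2_def power_mult[symmetric])
    finally show ?thesis .
  qed
  have LHS: "(\<Prod>m<2*N. ?p ^ N + ?w * ?p ^ m) = ?X ^ C * ((-1) ^ N * (Pi1 a b N * Pi2 a b N))"
  proof -
    have "(\<Prod>m<2*N. ?p ^ N + ?w * ?p ^ m) = (\<Prod>m<N+N. ?p ^ N + ?w * ?p ^ m)" by (simp add: mult_2)
    also have "\<dots> = (\<Prod>m<N. ?p ^ N + ?w * ?p ^ m) * (\<Prod>k<N. ?p ^ N + ?w * ?p ^ (N + k))"
      by (rule prod_split)
    also have "\<dots> = ?X ^ C * ((-1) ^ N * (Pi1 a b N * Pi2 a b N))"
      unfolding L1 L2 C_def by (simp add: power_add mult_ac)
    finally show ?thesis .
  qed
  have RHS: "(\<Sum>i\<le>2*N. qb ?p (2*N) i * ?p ^ tri i * ?w ^ i * (?p ^ N) ^ (2*N - i))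
     = ?X ^ C * (\<Sum>i\<le>2*N. (-1) ^ i * qb ?p (2*N) i * ?X ^ nat (ex a b (int i - int N)))"
    unfolding sum_distrib_left
  proof (rule sum.cong[OF refl])
    fix i assume i: "i \<in> {..2*N}"
    have e: "a * tri i + b * i + a * N * (2 * N - i) = C + nat (ex a b (int i - int N))"
      unfolding C_def by (rule exp_identity[OF b ab]) (use i in simp)
    have m1: "?w = (-1) * ?X ^ b" by simp
    have mw: "?w ^ i = (-1) ^ i * ?X ^ (b * i)" unfolding m1 power_mult_distrib Xpow ..
    have "qb ?p (2*N) i * ?p ^ tri i * ?w ^ i * (?p ^ N) ^ (2*N - i)
        = (-1) ^ i * qb ?p (2*N) i * ?X ^ (a * tri i + b * i + a * N * (2 * N - i))"
      unfolding mw Xpow by (simp only: power_add mult_ac)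
    also have "\<dots> = ?X ^ C * ((-1) ^ i * qb ?p (2*N) i * ?X ^ nat (ex a b (int i - int N)))"
      unfolding e by (simp add: power_add mult_ac)
    finally show "qb ?p (2*N) i * ?p ^ tri i * ?w ^ i * (?p ^ N) ^ (2*N - i) = ?X ^ C * ((-1) ^ i * qb ?p (2*N) i * ?X ^ nat (ex a b (int i - int N)))" .
  qed
  have "?X ^ C * ((-1) ^ N * (Pi1 a b N * Pi2 a b N)) = ?X ^ C * (\<Sum>i\<le>2*N. (-1) ^ i * qb ?p (2*N) i * ?X ^ nat (ex a b (int i - int N)))"
    using G LHS RHS by simp
  then show ?thesis by simp
qed


lemma sign_lemma: "(-1::int fps) ^ N * (-1) ^ i = (-1) ^ nat \<bar>int i - int N\<bar>"
proof (cases "N \<le> i")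
  case True
  then have h: "nat \<bar>int i - int N\<bar> = i - N" "i = (i - N) + N" by auto
  have "even i = (even (i - N) = even N)" by (subst h(2)) simp
  then show ?thesis unfolding h(1) by (auto simp: minus_one_power_iff)
next
  case False
  then have h: "nat \<bar>int i - int N\<bar> = N - i" "N = (N - i) + i" by auto
  have "even N = (even (N - i) = even i)" by (subst h(2)) simp
  then show ?thesis unfolding h(1) by (auto simp: minus_one_power_iff)
qed

definition Theta :: "nat \<Rightarrow> nat \<Rightarrow> nat \<Rightarrow> int fps" where
  "Theta a b N = (\<Sum>j\<in>{-int N..int N}. (-1) ^ nat \<bar>j\<bar> * fps_X ^ nat (ex a b j))"

lemma Theta_reindex:
  "(\<Sum>i\<le>2*N. (-1) ^ N * (-1) ^ i * fps_X ^ nat (ex a b (int i - int N))) = Theta a b N"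
  unfolding Theta_def sign_lemma
proof (rule sum.reindex_bij_witness[where i = "\<lambda>j. nat (j + int N)" and j = "\<lambda>i. int i - int N"])
qed auto

lemma JTP_trunc:
  assumes b: "0 < b" and ab: "b < a"
  shows "eqm (N + 1) (pp (fps_X ^ a) N * Pi1 a b N * Pi2 a b N) (Theta a b N)"
proof -
  let ?X = "fps_X :: int fps"
  let ?p = "?X ^ a"
  have a: "a > 0" using b ab by simp
  have "pp ?p N * Pi1 a b N * Pi2 a b N = (-1) ^ N * (pp ?p N * ((-1) ^ N * (Pi1 a b N * Pi2 a b N)))"
    by (simp add: mult_ac power_add[symmetric] power_mult[symmetric])
  also have "\<dots> = (\<Sum>i\<le>2*N. (-1) ^ N * (-1) ^ i * (?X ^ nat (ex a b (int i - int N)) * (pp ?p N * qb ?p (2*N) i)))"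
    unfolding JTP_finite[OF b ab] sum_distrib_left by (simp add: mult_ac)
  also have "eqm (N+1) \<dots> (\<Sum>i\<le>2*N. (-1) ^ N * (-1) ^ i * (?X ^ nat (ex a b (int i - int N)) * 1))"
  proof (rule eqm_sum, rule eqm_cmult)
    fix i assume i: "i \<in> {..2*N}"
    define E where "E = nat (ex a b (int i - int N))"
    show "eqm (N+1) (?X ^ nat (ex a b (int i - int N)) * (pp ?p N * qb ?p (2*N) i)) (?X ^ nat (ex a b (int i - int N)) * 1)"
      unfolding E_def[symmetric]
    proof (cases "N \<le> i")
      case True
      have "ex a b (int i - int N) \<ge> int i - int N" using ex_pos[OF b] True by simp
      then have "N + 1 \<le> (2*N - i + 1) + E" unfolding E_def using True i by auto
      then show "eqm (N+1) (?X ^ E * (pp ?p N * qb ?p (2*N) i)) (?X ^ E * 1)"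
        using eqm_shift[OF qb_trunc_hi[OF a True], of E] i by (auto intro: eqm_mono)
    next
      case False
      then have lt: "i < N" by simp
      have "ex a b (int i - int N) \<ge> - (int i - int N)" using ex_neg[OF ab, of "int i - int N"] lt by simp
      then have "N + 1 \<le> (i + 1) + E" unfolding E_def using lt by auto
      then show "eqm (N+1) (?X ^ E * (pp ?p N * qb ?p (2*N) i)) (?X ^ E * 1)"
        using eqm_shift[OF qb_trunc_lo[OF a lt], of E] by (auto intro: eqm_mono)
    qed
  qed
  also have "(\<Sum>i\<le>2*N. (-1) ^ N * (-1) ^ i * (?X ^ nat (ex a b (int i - int N)) * 1)) = Theta a b N"
    using Theta_reindex by simp
  finally show ?thesis .
qed


definition Prod6 :: "nat set \<Rightarrow> nat \<Rightarrow> int fps" where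
  "Prod6 R K = (\<Prod>k<K. if Suc k mod 6 \<in> R then 1 - fps_X ^ Suc k else 1)"

lemma Prod6_step: "Prod6 R (6 * Suc N) = Prod6 R (6 * N) *
   (\<Prod>k<6. if Suc (6 * N + k) mod 6 \<in> R then 1 - fps_X ^ Suc (6 * N + k) else 1)"
proof -
  have "6 * Suc N = 6 * N + 6" by simp
  then show ?thesis unfolding Prod6_def by (simp only: prod_split)
qed

lemma six_expand: "(\<Prod>k<(6::nat). f k) = f 0 * f 1 * f 2 * f 3 * f 4 * (f 5 :: int fps)"
  by (simp add: numeral_eq_Suc mult_ac)

lemma Prod6_R1: "Prod6 {1,5} (6 * N) = Pi1 6 1 N * Pi2 6 1 N"
proof (induction N)
  case 0 then show ?case by (simp add: Prod6_def Pi1_def Pi2_def)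
next
  case (Suc N)
  have m: "Suc (6 * N + k) mod 6 = Suc k mod 6" for k by (simp add: mod_Suc_eq add.commute)
  have e: "6 * (Suc N) - 1 = 6 * N + 5" by simp
  show ?case unfolding Prod6_step Suc six_expand m
    by (simp add: Pi1_def Pi2_def e mult_ac)
qed

lemma Prod6_R2: "Prod6 {2,4} (6 * N) = Pi1 6 2 N * Pi2 6 2 N"
proof (induction N)
  case 0 then show ?case by (simp add: Prod6_def Pi1_def Pi2_def)
next
  case (Suc N)
  have m: "Suc (6 * N + k) mod 6 = Suc k mod 6" for k by (simp add: mod_Suc_eq add.commute)
  have e: "6 * (Suc N) - 2 = 6 * N + 4" by simp
  show ?case unfolding Prod6_step Suc six_expand m
    by (simp add: Pi1_def Pi2_def e mult_ac)
qed

lemma three_expand: "(\<Prod>k<(3::nat). f k) = f 0 * f 1 * (f 2 :: int fps)"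
  by (simp add: numeral_eq_Suc mult_ac)

lemma Prod_C: "pp (fps_X ^ 18) N * Pi1 18 6 N * Pi2 18 6 N = pp (fps_X ^ 6 :: int fps) (3 * N)"
proof (induction N)
  case 0 then show ?case by (simp add: pp_def Pi1_def Pi2_def)
next
  case (Suc N)
  have s: "3 * Suc N = 3 * N + 3" by simp
  have e: "18 * (Suc N) - 6 = 18 * N + 12" by simp
  have "pp (fps_X ^ 6 :: int fps) (3 * Suc N) = pp (fps_X ^ 6) (3 * N) * (\<Prod>k<3. 1 - (fps_X ^ 6) ^ (3 * N + k + 1))"
    unfolding s by (rule pp_split)
  also have "\<dots> = pp (fps_X ^ 6) (3 * N) * ((1 - fps_X ^ (18 * N + 6)) * (1 - fps_X ^ (18 * N + 12)) * (1 - fps_X ^ (18 * N + 18)))"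
    unfolding three_expand Xpow by (simp add: algebra_simps)
  also have "\<dots> = (pp (fps_X ^ 18) N * Pi1 18 6 N * Pi2 18 6 N) * ((1 - fps_X ^ (18 * N + 6)) * (1 - fps_X ^ (18 * N + 12)) * (1 - fps_X ^ (18 * N + 18)))"
    unfolding Suc.IH ..
  also have "\<dots> = pp (fps_X ^ 18) (Suc N) * Pi1 18 6 (Suc N) * Pi2 18 6 (Suc N)"
  proof -
    have h1: "pp (fps_X ^ 18 :: int fps) (Suc N) = pp (fps_X ^ 18) N * (1 - fps_X ^ (18 * N + 18))"
      unfolding pp_Suc Xpow by simp
    have h2: "Pi1 18 6 (Suc N) = Pi1 18 6 N * (1 - fps_X ^ (18 * N + 12))"
      unfolding Pi1_def by (simp add: e)
    have h3: "Pi2 18 6 (Suc N) = Pi2 18 6 N * (1 - fps_X ^ (18 * N + 6))"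
      unfolding Pi2_def by simp
    show ?thesis unfolding h1 h2 h3 by (simp only: mult_ac)
  qed
  finally show ?case by simp
qed


lemma neg1_const: "(-1::int fps) ^ m = fps_const ((-1) ^ m)"
proof -
  have "(-1::int fps) = fps_const (-1)" by (simp flip: fps_const_neg)
  then show ?thesis by simp
qed

lemma parts_count_neg: "m < 0 \<Longrightarrow> parts_count R m = 0"
  by (simp add: parts_count_def)

lemma coeff_F_Theta:
  assumes b: "0 < b" and ab: "b < a" and n: "n \<le> 6 * N"
  shows "fps_nth (GF R (6 * N) * Theta a b N) n =
    (\<Sum>j\<in>{-int N..int N}. (-1) ^ nat \<bar>j\<bar> * parts_count R (int n - ex a b j))"
proof -
  have "GF R (6 * N) * Theta a b N = (\<Sum>j\<in>{-int N..int N}. fps_const ((-1) ^ nat \<bar>j\<bar>) * (GF R (6 * N) * fps_X ^ nat (ex a b j)))"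
    unfolding Theta_def sum_distrib_left neg1_const by (simp add: mult_ac)
  then have "fps_nth (GF R (6 * N) * Theta a b N) n = (\<Sum>j\<in>{-int N..int N}. (-1) ^ nat \<bar>j\<bar> * fps_nth (GF R (6 * N) * fps_X ^ nat (ex a b j)) n)"
    by (simp add: fps_sum_nth)
  also have "\<dots> = (\<Sum>j\<in>{-int N..int N}. (-1) ^ nat \<bar>j\<bar> * parts_count R (int n - ex a b j))"
  proof (rule sum.cong[OF refl])
    fix j
    have e0: "ex a b j \<ge> 0" by (rule ex_nonneg[OF b ab])
    have "fps_nth (GF R (6 * N) * fps_X ^ nat (ex a b j)) n = parts_count R (int n - ex a b j)"
    proof (cases "n < nat (ex a b j)")
      case True
      then show ?thesis using e0 by (simp add: fps_X_power_mult_right_nth parts_count_neg)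
    next
      case False
      then have "fps_nth (GF R (6 * N)) (n - nat (ex a b j)) = parts_count R (int (n - nat (ex a b j)))"
        using n by (intro GF_nth) simp
      moreover have "int (n - nat (ex a b j)) = int n - ex a b j" using False e0 by simp
      ultimately show ?thesis using False by (simp add: fps_X_power_mult_right_nth)
    qed
    then show "(-1) ^ nat \<bar>j\<bar> * fps_nth (GF R (6 * N) * fps_X ^ nat (ex a b j)) n = (-1) ^ nat \<bar>j\<bar> * parts_count R (int n - ex a b j)"
      by simp
  qed
  finally show ?thesis .
qed

lemma coeff_Theta:
  "fps_nth (Theta a b N) n = (\<Sum>j\<in>{-int N..int N}. (-1) ^ nat \<bar>j\<bar> * (if n = nat (ex a b j) then 1 else 0))"
  unfolding Theta_def neg1_const by (simp add: fps_sum_nth)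

lemma sym_sum: "(\<Sum>j\<in>{-int N..int N}. g j) = g 0 + (\<Sum>j\<in>{1..int N}. g j + g (- j))"
proof (induction N)
  case 0 then show ?case by simp
next
  case (Suc N)
  have s1: "{-int (Suc N)..int (Suc N)} = insert (int N + 1) (insert (-(int N + 1)) {-int N..int N})" by auto
  have s2: "{1..int (Suc N)} = insert (int N + 1) {1..int N}" by auto
  show ?case unfolding s1 s2 using Suc by (simp add: algebra_simps)
qed


lemma ex_611: "ex 6 1 j = j * (3 * j - 2)" "ex 6 1 (- j) = j * (3 * j + 2)"
proof -
  have "ex 6 1 j = 3 * (T2 j * 2) + j" "ex 6 1 (-j) = 3 * (T2 (-j) * 2) - j" by (simp_all add: ex_def)
  then show "ex 6 1 j = j * (3 * j - 2)" "ex 6 1 (- j) = j * (3 * j + 2)"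
    unfolding T2_twice by (simp_all add: algebra_simps)
qed

lemma ex_62: "ex 6 2 j = j * (3 * j - 1)" "ex 6 2 (- j) = j * (3 * j + 1)"
proof -
  have "ex 6 2 j = 3 * (T2 j * 2) + 2 * j" "ex 6 2 (-j) = 3 * (T2 (-j) * 2) - 2 * j" by (simp_all add: ex_def)
  then show "ex 6 2 j = j * (3 * j - 1)" "ex 6 2 (- j) = j * (3 * j + 1)"
    unfolding T2_twice by (simp_all add: algebra_simps)
qed

lemma ex_186: "ex 18 6 j = 6 * (j * (3 * j - 1) div 2)"
proof -
  have ev: "even (j * (3 * j - 1))" by auto
  have "ex 18 6 j = 9 * (T2 j * 2) + 6 * j" by (simp add: ex_def)
  also have "\<dots> = 3 * (j * (3 * j - 1))" unfolding T2_twice by (simp add: algebra_simps)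
  also have "\<dots> = 6 * (j * (3 * j - 1) div 2)" using ev by auto
  finally show ?thesis .
qed

lemma E_inj: "6 * (j * (3 * j - 1) div 2) = 6 * (k * (3 * k - 1) div 2) \<Longrightarrow> j = (k::int)"
proof -
  assume h: "6 * (j * (3 * j - 1) div 2) = 6 * (k * (3 * k - 1) div 2)"
  then have "ex 18 6 j = ex 18 6 k" by (simp add: ex_186)
  then have "9 * (T2 j * 2) + 6 * j = 9 * (T2 k * 2) + 6 * k" by (simp add: ex_def)
  then have "3 * ((j - k) * (3 * (j + k) - 1)) = 0" unfolding T2_twice by (simp add: algebra_simps)
  moreover have "3 * (j + k) - 1 \<noteq> 0" by presburger
  ultimately show "j = k" by simp
qed

lemma ex_abs: "\<bar>j\<bar> \<le> ex 18 6 j"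
  using ex_pos[of 6 j 18] ex_neg[of 6 18 j] by (cases "j \<ge> 0") auto


lemma lhs1:
  assumes n: "n \<ge> 0"
  shows "fps_nth (GF {1,5} (6 * nat n) * Theta 6 1 (nat n)) (nat n) =
    s1 n + (\<Sum>j=1..n. (-1) ^ nat j * (s1 (n - j*(3*j-2)) + s1 (n - j*(3*j+2))))"
proof -
  have "fps_nth (GF {1,5} (6 * nat n) * Theta 6 1 (nat n)) (nat n) =
    (\<Sum>j\<in>{-int (nat n)..int (nat n)}. (-1) ^ nat \<bar>j\<bar> * parts_count {1,5} (int (nat n) - ex 6 1 j))"
    by (rule coeff_F_Theta) auto
  also have "\<dots> = (-1) ^ nat \<bar>0::int\<bar> * parts_count {1,5} (int (nat n) - ex 6 1 0) +
     (\<Sum>j\<in>{1..int (nat n)}. (-1) ^ nat \<bar>j\<bar> * parts_count {1,5} (int (nat n) - ex 6 1 j)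
        + (-1) ^ nat \<bar>-j\<bar> * parts_count {1,5} (int (nat n) - ex 6 1 (-j)))"
    by (rule sym_sum)
  also have "\<dots> = s1 n + (\<Sum>j=1..n. (-1) ^ nat j * (s1 (n - j*(3*j-2)) + s1 (n - j*(3*j+2))))"
  proof -
    have "ex 6 1 0 = 0" by (simp add: ex_def T2_def)
    moreover have "(\<Sum>j\<in>{1..int (nat n)}. (-1) ^ nat \<bar>j\<bar> * parts_count {1,5} (int (nat n) - ex 6 1 j)
        + (-1) ^ nat \<bar>-j\<bar> * parts_count {1,5} (int (nat n) - ex 6 1 (-j)))
      = (\<Sum>j=1..n. (-1) ^ nat j * (s1 (n - j*(3*j-2)) + s1 (n - j*(3*j+2))))"
    proof (rule sum.cong)
      fix j assume j: "j \<in> {1..n}"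
      then have "nat \<bar>j\<bar> = nat j" "nat \<bar>-j\<bar> = nat j" by auto
      then show "(-1) ^ nat \<bar>j\<bar> * parts_count {1,5} (int (nat n) - ex 6 1 j)
        + (-1) ^ nat \<bar>-j\<bar> * parts_count {1,5} (int (nat n) - ex 6 1 (-j)) = (-1) ^ nat j * (s1 (n - j*(3*j-2)) + s1 (n - j*(3*j+2)))"
        unfolding ex_611 s1_def using n by (simp add: algebra_simps)
    qed (use n in simp)
    moreover have "parts_count {1,5} (int (nat n) - 0) = s1 n" using n by (simp add: s1_def)
    ultimately show ?thesis by simp
  qed
  finally show ?thesis .
qed

lemma lhs2:
  assumes n: "n \<ge> 0"
  shows "fps_nth (GF {2,4} (6 * nat n) * Theta 6 2 (nat n)) (nat n) =
    s2 n + (\<Sum>j=1..n. (-1) ^ nat j * (s2 (n - j*(3*j-1)) + s2 (n - j*(3*j+1))))"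
proof -
  have "fps_nth (GF {2,4} (6 * nat n) * Theta 6 2 (nat n)) (nat n) =
    (\<Sum>j\<in>{-int (nat n)..int (nat n)}. (-1) ^ nat \<bar>j\<bar> * parts_count {2,4} (int (nat n) - ex 6 2 j))"
    by (rule coeff_F_Theta) auto
  also have "\<dots> = (-1) ^ nat \<bar>0::int\<bar> * parts_count {2,4} (int (nat n) - ex 6 2 0) +
     (\<Sum>j\<in>{1..int (nat n)}. (-1) ^ nat \<bar>j\<bar> * parts_count {2,4} (int (nat n) - ex 6 2 j)
        + (-1) ^ nat \<bar>-j\<bar> * parts_count {2,4} (int (nat n) - ex 6 2 (-j)))"
    by (rule sym_sum)
  also have "\<dots> = s2 n + (\<Sum>j=1..n. (-1) ^ nat j * (s2 (n - j*(3*j-1)) + s2 (n - j*(3*j+1))))"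
  proof -
    have "ex 6 2 0 = 0" by (simp add: ex_def T2_def)
    moreover have "(\<Sum>j\<in>{1..int (nat n)}. (-1) ^ nat \<bar>j\<bar> * parts_count {2,4} (int (nat n) - ex 6 2 j)
        + (-1) ^ nat \<bar>-j\<bar> * parts_count {2,4} (int (nat n) - ex 6 2 (-j)))
      = (\<Sum>j=1..n. (-1) ^ nat j * (s2 (n - j*(3*j-1)) + s2 (n - j*(3*j+1))))"
    proof (rule sum.cong)
      fix j assume j: "j \<in> {1..n}"
      then have "nat \<bar>j\<bar> = nat j" "nat \<bar>-j\<bar> = nat j" by auto
      then show "(-1) ^ nat \<bar>j\<bar> * parts_count {2,4} (int (nat n) - ex 6 2 j)
        + (-1) ^ nat \<bar>-j\<bar> * parts_count {2,4} (int (nat n) - ex 6 2 (-j)) = (-1) ^ nat j * (s2 (n - j*(3*j-1)) + s2 (n - j*(3*j+1)))"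
        unfolding ex_62 s2_def using n by (simp add: algebra_simps)
    qed (use n in simp)
    moreover have "parts_count {2,4} (int (nat n) - 0) = s2 n" using n by (simp add: s2_def)
    ultimately show ?thesis by simp
  qed
  finally show ?thesis .
qed

lemma rhs_eq:
  "eqm (N + 1) (GF {1,5} (6 * N) * Theta 6 1 N) (Theta 18 6 N)"
  "eqm (N + 1) (GF {2,4} (6 * N) * Theta 6 2 N) (Theta 18 6 N)"
proof -
  let ?F1 = "GF {1,5} (6 * N)" and ?F2 = "GF {2,4} (6 * N)"
  have C: "eqm (N + 1) (pp (fps_X ^ 6) N) (Theta 18 6 N)"
  proof -
    have "eqm (N + 1) (pp (fps_X ^ 6) N) (pp (fps_X ^ 6) (3 * N))"
      by (rule eqm_sym, rule pp_eqm) auto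
    also have "pp (fps_X ^ 6 :: int fps) (3 * N) = pp (fps_X ^ 18) N * Pi1 18 6 N * Pi2 18 6 N"
      by (rule Prod_C[symmetric])
    also have "eqm (N + 1) \<dots> (Theta 18 6 N)" by (rule JTP_trunc) auto
    finally show ?thesis .
  qed
  have "eqm (N + 1) (?F1 * Theta 6 1 N) (?F1 * (pp (fps_X ^ 6) N * Pi1 6 1 N * Pi2 6 1 N))"
    by (rule eqm_cmult, rule eqm_sym, rule JTP_trunc) auto
  also have "?F1 * (pp (fps_X ^ 6) N * Pi1 6 1 N * Pi2 6 1 N) = pp (fps_X ^ 6) N * (?F1 * Prod6 {1,5} (6 * N))"
    unfolding Prod6_R1 by (simp only: mult_ac)
  also have "\<dots> = pp (fps_X ^ 6) N"
    using GF_prod[of "{1,5}" "6 * N"] by (simp add: Prod6_def)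
  also note C
  finally show "eqm (N + 1) (?F1 * Theta 6 1 N) (Theta 18 6 N)" .
  have "eqm (N + 1) (?F2 * Theta 6 2 N) (?F2 * (pp (fps_X ^ 6) N * Pi1 6 2 N * Pi2 6 2 N))"
    by (rule eqm_cmult, rule eqm_sym, rule JTP_trunc) auto
  also have "?F2 * (pp (fps_X ^ 6) N * Pi1 6 2 N * Pi2 6 2 N) = pp (fps_X ^ 6) N * (?F2 * Prod6 {2,4} (6 * N))"
    unfolding Prod6_R2 by (simp only: mult_ac)
  also have "\<dots> = pp (fps_X ^ 6) N"
    using GF_prod[of "{2,4}" "6 * N"] by (simp add: Prod6_def)
  also note C
  finally show "eqm (N + 1) (?F2 * Theta 6 2 N) (Theta 18 6 N)" .
qed

lemma rhs_value:
  assumes n: "n \<ge> 0"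
  shows "fps_nth (Theta 18 6 (nat n)) (nat n) =
     (if \<exists>j::int. even j \<and> n = 6 * (j*(3*j-1) div 2) then 1
          else if \<exists>j::int. odd j \<and> n = 6 * (j*(3*j-1) div 2) then -1
          else 0)"
proof -
  let ?S = "{-int (nat n)..int (nat n)}"
  have c: "fps_nth (Theta 18 6 (nat n)) (nat n) = (\<Sum>j\<in>?S. (-1) ^ nat \<bar>j\<bar> * (if nat n = nat (ex 18 6 j) then 1 else 0))"
    by (rule coeff_Theta)
  have iff: "(nat n = nat (ex 18 6 j)) = (n = 6 * (j*(3*j-1) div 2))" for j
  proof -
    have "0 \<le> ex 18 6 j" by (rule ex_nonneg) auto
    then have "(nat n = nat (ex 18 6 j)) = (n = ex 18 6 j)" using n by (simp add: eq_nat_nat_iff)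
    then show ?thesis by (simp only: ex_186)
  qed
  have single: "fps_nth (Theta 18 6 (nat n)) (nat n) = (-1) ^ nat \<bar>j0\<bar>" if j0: "n = 6 * (j0*(3*j0-1) div 2)" for j0
  proof -
    have "(\<Sum>j\<in>?S. (-1) ^ nat \<bar>j\<bar> * (if nat n = nat (ex 18 6 j) then 1 else 0)) = (\<Sum>j\<in>?S. if j = j0 then (-1) ^ nat \<bar>j\<bar> else (0::int))"
    proof (rule sum.cong[OF refl])
      fix j
      have "(nat n = nat (ex 18 6 j)) = (j = j0)" unfolding iff using j0 E_inj[of j j0] by auto
      then show "(-1) ^ nat \<bar>j\<bar> * (if nat n = nat (ex 18 6 j) then 1 else 0) = (if j = j0 then (-1) ^ nat \<bar>j\<bar> else (0::int))"
        by simp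
    qed
    also have "\<dots> = (-1) ^ nat \<bar>j0\<bar>"
    proof -
      have "\<bar>j0\<bar> \<le> n" using ex_abs[of j0] j0 by (simp add: ex_186)
      then have "j0 \<in> ?S" using n by auto
      then show ?thesis by simp
    qed
    finally show ?thesis using c by simp
  qed
  show ?thesis
  proof (cases "\<exists>j::int. even j \<and> n = 6 * (j*(3*j-1) div 2)")
    case True
    then obtain j0 where "even j0" "n = 6 * (j0*(3*j0-1) div 2)" by blast
    moreover have "even (nat \<bar>j0\<bar>)" using \<open>even j0\<close> by (simp add: even_nat_iff)
    ultimately show ?thesis using single True by simp
  next
    case False
    show ?thesis
    proof (cases "\<exists>j::int. odd j \<and> n = 6 * (j*(3*j-1) div 2)")
      case True
      then obtain j0 where "odd j0" "n = 6 * (j0*(3*j0-1) div 2)" by blast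
      moreover have "odd (nat \<bar>j0\<bar>)" using \<open>odd j0\<close> by (simp add: even_nat_iff)
      ultimately show ?thesis using single True False by simp
    next
      case False2: False
      have "\<forall>j. \<not> (n = 6 * (j*(3*j-1) div 2))" using False False2 by blast
      then have "\<forall>j. nat n \<noteq> nat (ex 18 6 j)" unfolding iff by blast
      then show ?thesis using c False False2 by simp
    qed
  qed
qed

theorem corollary2:
  fixes n :: int
  assumes "n \<ge> 0"
  shows "s1 n + (\<Sum>j=1..n. (-1) ^ nat j * (s1 (n - j*(3*j-2)) + s1 (n - j*(3*j+2))))
       = s2 n + (\<Sum>j=1..n. (-1) ^ nat j * (s2 (n - j*(3*j-1)) + s2 (n - j*(3*j+1))))
     \<and> s1 n + (\<Sum>j=1..n. (-1) ^ nat j * (s1 (n - j*(3*j-2)) + s1 (n - j*(3*j+2))))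
       = (if \<exists>j::int. even j \<and> n = 6 * (j*(3*j-1) div 2) then 1
          else if \<exists>j::int. odd j \<and> n = 6 * (j*(3*j-1) div 2) then -1
          else 0)"
proof -
  let ?N = "nat n"
  have e1: "fps_nth (GF {1,5} (6 * ?N) * Theta 6 1 ?N) ?N = fps_nth (Theta 18 6 ?N) ?N"
    using rhs_eq(1)[of ?N] unfolding eqm_def by simp
  have e2: "fps_nth (GF {2,4} (6 * ?N) * Theta 6 2 ?N) ?N = fps_nth (Theta 18 6 ?N) ?N"
    using rhs_eq(2)[of ?N] unfolding eqm_def by simp
  show ?thesis
    using e1 e2 lhs1[OF assms] lhs2[OF assms] rhs_value[OF assms] by simp
qed


end
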